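(* Let $c>\frac12$ and $\delta>0$ be fixed. Let $\ell\ge4$ and let $\ell_1,\ell_2,\ell_3,\ell_4$ be positive integers with $\ell_1+\ell_2+\ell_3+\ell_4=\ell$. For $\mathbf y_1,\dots,\mathbf y_{\ell-2}\in\mathbb R^n$ and $\varepsilon_1,\dots,\varepsilon_{\ell-2}\in\{1,-1\}$ put $$I_{\mathbf y}=V_n^{-2\ell c}\int_{\mathbb R^n}\int_{\mathbb R^n}f_{c,\delta}(\mathbf x_1)\prod_{i=1}^{\ell_1-1}f_{c,\delta}(\varepsilon_i\mathbf x_1+\mathbf y_i)\; f_{c,\delta}(\mathbf x_2)\prod_{i=\ell_1}^{\ell_1+\ell_2-2}f_{c,\delta}(\varepsilon_i\mathbf x_2+\mathbf y_i)$$ $$\times\prod_{i=\ell_1+\ell_2-1}^{\ell_1+\ell_2+\ell_3-2}f_{c,\delta}\big(\varepsilon_i(\mathbf x_1+\mathbf x_2)+\mathbf y_i\big)\prod_{i=\ell_1+\ell_2+\ell_3-1}^{\ell-2}f_{c,\delta}\big(\varepsilon_i(\mathbf x_1-\mathbf x_2)+\mathbf y_i\big)\,d\mathbf x_1\,d\mathbf x_2 .$$ Then there exist constants $K>0$ and $0<\rho<1$, depending only on $\ell,c,\delta$ (and not on $n$, the $\varepsilon_i$ or the $\mathbf y_i$), such that $I_{\mathbf y}\le K\rho^n$ for all $n\ge1$, all $\varepsilon_i\in\{\pm1\}$ and all $\mathbf y_i\in\mathbb R^n$.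
   Context: $V_n=\pi^{n/2}/\Gamma(\frac n2+1)$ is the volume of the unit ball in $\mathbb R^n$, $R_n(\delta)=(\delta/V_n)^{1/n}$, and $f_{c,\delta}:\mathbb R^n\to\mathbb R$ is $f_{c,\delta}(\mathbf x)=|\mathbf x|^{-2cn}$ if $|\mathbf x|>R_n(\delta)$ and $f_{c,\delta}(\mathbf x)=0$ otherwise. Empty products equal $1$. *)

theory Defs
  imports "HOL-Analysis.Analysis"
begin

text \<open>Vectors of R^n are represented as functions nat => real, only the
coordinates 0..n-1 being relevant; Lebesgue measure on R^n is the product
measure PiM {..<n} (\<lambda>_. lborel).\<close>

definition lebesgue_n :: "nat \<Rightarrow> (nat \<Rightarrow> real) measure" where
  "lebesgue_n n = PiM {..<n} (\<lambda>_. lborel)"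

definition norm_n :: "nat \<Rightarrow> (nat \<Rightarrow> real) \<Rightarrow> real" where
  "norm_n n x = sqrt (\<Sum>i<n. (x i)\<^sup>2)"

definition V :: "nat \<Rightarrow> real" where
  "V n = pi powr (real n / 2) / Gamma (real n / 2 + 1)"

definition R :: "nat \<Rightarrow> real \<Rightarrow> real" where
  "R n \<delta> = (\<delta> / V n) powr (1 / real n)"

definition f_cd :: "nat \<Rightarrow> real \<Rightarrow> real \<Rightarrow> (nat \<Rightarrow> real) \<Rightarrow> real" where
  "f_cd n c \<delta> x = (if norm_n n x > R n \<delta> then norm_n n x powr (- 2 * c * real n) else 0)"

definition vadd :: "(nat \<Rightarrow> real) \<Rightarrow> (nat \<Rightarrow> real) \<Rightarrow> nat \<Rightarrow> real" where
  "vadd x y = (\<lambda>i. x i + y i)"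

definition vsub :: "(nat \<Rightarrow> real) \<Rightarrow> (nat \<Rightarrow> real) \<Rightarrow> nat \<Rightarrow> real" where
  "vsub x y = (\<lambda>i. x i - y i)"

definition vscale :: "real \<Rightarrow> (nat \<Rightarrow> real) \<Rightarrow> nat \<Rightarrow> real" where
  "vscale a x = (\<lambda>i. a * x i)"

text \<open>The integral I_y (as a nonnegative Lebesgue integral; integrand is nonnegative).\<close>
definition I_y :: "nat \<Rightarrow> real \<Rightarrow> real \<Rightarrow> nat \<Rightarrow> nat \<Rightarrow> nat \<Rightarrow> nat \<Rightarrow> nat
    \<Rightarrow> (nat \<Rightarrow> real) \<Rightarrow> (nat \<Rightarrow> nat \<Rightarrow> real) \<Rightarrow> ennreal" where
  "I_y n c \<delta> l l1 l2 l3 l4 \<epsilon> y =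
     ennreal (V n powr (- 2 * real l * c)) *
     (\<integral>\<^sup>+ x1. \<integral>\<^sup>+ x2. ennreal (
        f_cd n c \<delta> x1
        * (\<Prod>i\<in>{1..l1 - 1}. f_cd n c \<delta> (vadd (vscale (\<epsilon> i) x1) (y i)))
        * f_cd n c \<delta> x2
        * (\<Prod>i\<in>{l1..l1 + l2 - 2}. f_cd n c \<delta> (vadd (vscale (\<epsilon> i) x2) (y i)))
        * (\<Prod>i\<in>{l1 + l2 - 1..l1 + l2 + l3 - 2}.
             f_cd n c \<delta> (vadd (vscale (\<epsilon> i) (vadd x1 x2)) (y i)))
        * (\<Prod>i\<in>{l1 + l2 + l3 - 1..l - 2}.
             f_cd n c \<delta> (vadd (vscale (\<epsilon> i) (vsub x1 x2)) (y i))))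
      \<partial>lebesgue_n n \<partial>lebesgue_n n)"

end

theory Submission
  imports Defs "HOL-Analysis.Analysis"
begin



lemma pim_affine:
  fixes A :: "'i set" and a :: real
  assumes "finite A" "a \<noteq> 0"
  shows "h \<in> borel_measurable (PiM A (\<lambda>_. lborel)) \<Longrightarrow>
    (\<integral>\<^sup>+x. h (\<lambda>i\<in>A. a * x i + p i) \<partial>PiM A (\<lambda>_. lborel))
     = ennreal ((1/\<bar>a\<bar>)^card A) * (\<integral>\<^sup>+x. h x \<partial>PiM A (\<lambda>_. lborel))"
  using assms(1)
proof (induction A arbitrary: h rule: finite_induct)
  case empty
  then show ?case by (simp add: PiM_empty nn_integral_count_space_finite)
next
  case (insert i A)
  interpret product_sigma_finite "\<lambda>_. lborel" by standard
  note hm[measurable] = insert.prems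
  let ?g = "\<lambda>x. (\<lambda>j\<in>A. a * x j + p j)"
  define k where "k z = (\<integral>\<^sup>+s. h (z(i:=s)) \<partial>lborel)" for z
  have km[measurable]: "k \<in> borel_measurable (PiM A (\<lambda>_. lborel))"
    unfolding k_def by measurable
  have "(\<integral>\<^sup>+x. h (\<lambda>j\<in>insert i A. a * x j + p j) \<partial>PiM (insert i A) (\<lambda>_. lborel))
     = (\<integral>\<^sup>+x. (\<integral>\<^sup>+t. h (\<lambda>j\<in>insert i A. a * ((x::'i\<Rightarrow>real)(i:=t)) j + p j) \<partial>lborel) \<partial>PiM A (\<lambda>_. lborel))"
    by (rule product_nn_integral_insert) (use insert in auto)
  also have "\<dots> = (\<integral>\<^sup>+x. ennreal (1/\<bar>a\<bar>) * k (?g x) \<partial>PiM A (\<lambda>_. lborel))"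
  proof (rule nn_integral_cong)
    fix x :: "'i \<Rightarrow> real" assume x: "x \<in> space (PiM A (\<lambda>_. lborel))"
    have eq: "(\<lambda>j\<in>insert i A. a * ((x::'i\<Rightarrow>real)(i:=t)) j + p j) = (?g x)(i := p i + a * t)" for t
      using insert.hyps(2) by (auto simp: fun_eq_iff)
    have gx: "?g x \<in> space (PiM A (\<lambda>_. lborel))" by (simp add: space_PiM)
    have mm: "(\<lambda>s. h ((?g x)(i:=s))) \<in> borel_measurable borel"
      using measurable_comp[OF measurable_component_update hm, OF gx \<open>i \<notin> A\<close>]
      unfolding comp_def by simp
    have "k (?g x) = ennreal \<bar>a\<bar> * (\<integral>\<^sup>+t. h ((?g x)(i := p i + a * t)) \<partial>lborel)"
      unfolding k_def by (rule nn_integral_real_affine[OF mm assms(2)])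
    then have "ennreal (1/\<bar>a\<bar>) * k (?g x) = ennreal (1/\<bar>a\<bar>) * ennreal \<bar>a\<bar> * (\<integral>\<^sup>+t. h ((?g x)(i := p i + a * t)) \<partial>lborel)"
      by (simp add: mult.assoc)
    also have "ennreal (1/\<bar>a\<bar>) * ennreal \<bar>a\<bar> = 1"
      using assms(2) by (simp flip: ennreal_mult)
    finally have kk: "ennreal (1/\<bar>a\<bar>) * k (?g x) = (\<integral>\<^sup>+t. h ((?g x)(i := p i + a * t)) \<partial>lborel)" by (simp only: mult.left_neutral)
    have "(\<integral>\<^sup>+t. h (\<lambda>j\<in>insert i A. a * ((x::'i\<Rightarrow>real)(i:=t)) j + p j) \<partial>lborel) = (\<integral>\<^sup>+t. h ((?g x)(i := p i + a * t)) \<partial>lborel)"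
      by (simp only: eq)
    then show "(\<integral>\<^sup>+t. h (\<lambda>j\<in>insert i A. a * ((x::'i\<Rightarrow>real)(i:=t)) j + p j) \<partial>lborel) = ennreal (1/\<bar>a\<bar>) * k (?g x)"
      using kk by simp
  qed
  also have "\<dots> = ennreal (1/\<bar>a\<bar>) * (\<integral>\<^sup>+x. k (?g x) \<partial>PiM A (\<lambda>_. lborel))"
    by (rule nn_integral_cmult) measurable
  also have "\<dots> = ennreal (1/\<bar>a\<bar>) * (ennreal ((1/\<bar>a\<bar>)^card A) * (\<integral>\<^sup>+x. k x \<partial>PiM A (\<lambda>_. lborel)))"
    by (simp only: insert.IH[OF km])
  also have "(\<integral>\<^sup>+x. k x \<partial>PiM A (\<lambda>_. lborel)) = (\<integral>\<^sup>+x. h x \<partial>PiM (insert i A) (\<lambda>_. lborel))"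
    unfolding k_def by (rule product_nn_integral_insert[symmetric]) (use insert in auto)
  finally show ?case using insert.hyps
    by (simp add: mult.assoc[symmetric] ennreal_mult[symmetric])
qed


lemma V_pos: "V n > 0"
  unfolding V_def by (intro divide_pos_pos) (auto intro: Gamma_real_pos)

lemma V_eq: "V n = unit_ball_vol (real n)"
  unfolding V_def unit_ball_vol_def by simp

lemma R_pos: "\<delta> > 0 \<Longrightarrow> R n \<delta> > 0"
  unfolding R_def using V_pos[of n] by simp

lemma R_pow: "\<delta> > 0 \<Longrightarrow> n \<ge> 1 \<Longrightarrow> V n * R n \<delta> ^ n = \<delta>"
proof -
  assume d: "\<delta> > 0" "n \<ge> 1"
  have "R n \<delta> ^ n = ((\<delta> / V n) powr (1 / real n)) powr real n"
    unfolding R_def using d V_pos[of n] by (simp add: powr_realpow)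
  also have "\<dots> = \<delta> / V n" using d V_pos[of n] by (simp add: powr_powr)
  finally show ?thesis using V_pos[of n] by simp
qed

lemma norm_meas:
  assumes "\<And>i. i < n \<Longrightarrow> (\<lambda>z. g z i) \<in> borel_measurable N"
  shows "(\<lambda>z. norm_n n (g z)) \<in> borel_measurable N"
proof -
  have [measurable]: "(\<lambda>z. \<Sum>i<n. (g z i)\<^sup>2) \<in> borel_measurable N"
    by (rule borel_measurable_sum) (use assms in measurable)
  show ?thesis unfolding norm_n_def by measurable
qed

lemma f_meas:
  assumes "\<And>i. i < n \<Longrightarrow> (\<lambda>z. g z i) \<in> borel_measurable N"
  shows "(\<lambda>z. f_cd n c \<delta> (g z)) \<in> borel_measurable N"
proof -
  note [measurable] = norm_meas[OF assms]
  show ?thesis unfolding f_cd_def by measurable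
qed

lemma f_nonneg: "0 \<le> f_cd n c \<delta> x"
  unfolding f_cd_def by simp

lemma f_le:
  assumes "c > 0" "\<delta> > 0" "n \<ge> 1"
  shows "f_cd n c \<delta> x \<le> R n \<delta> powr (-2*c*real n)"
proof (cases "norm_n n x > R n \<delta>")
  case True
  have "norm_n n x powr (-2*c*real n) \<le> R n \<delta> powr (-2*c*real n)"
    by (rule powr_mono2') (use assms True R_pos[of \<delta> n] in auto)
  then show ?thesis using True unfolding f_cd_def by simp
next
  case False
  then show ?thesis unfolding f_cd_def by simp
qed

lemma f_cong: "(\<And>i. i < n \<Longrightarrow> x i = y i) \<Longrightarrow> f_cd n c \<delta> x = f_cd n c \<delta> y"
proof -
  assume a: "\<And>i. i < n \<Longrightarrow> x i = y i"
  have "norm_n n x = norm_n n y" unfolding norm_n_def by (rule arg_cong[where f=sqrt], rule sum.cong) (auto simp: a)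
  then show ?thesis unfolding f_cd_def by simp
qed

lemma ball_meas:
  assumes "r > 0"
  shows "emeasure (lebesgue_n n) ({x. norm_n n x \<le> r} \<inter> space (lebesgue_n n)) = ennreal (V n * r ^ n)"
  using emeasure_cball_aux[of "{..<n}" r] assms
  unfolding lebesgue_n_def norm_n_def V_eq by simp


lemma f_point:
  assumes c: "c > 1/2" and d: "\<delta> > 0" and n: "n \<ge> 1" and x: "x \<in> space (lebesgue_n n)"
  shows "ennreal (f_cd n c \<delta> x) \<le> (\<Sum>k. ennreal (R n \<delta> powr (-2*c*real n) * 2 powr (-2*c*real k))
     * indicator ({x. norm_n n x \<le> R n \<delta> * 2 powr ((real k + 1)/real n)} \<inter> space (lebesgue_n n)) x)"
    (is "_ \<le> (\<Sum>k. ?F k)")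
proof (cases "norm_n n x > R n \<delta>")
  case False
  then show ?thesis unfolding f_cd_def by simp
next
  case True
  define Rr where "Rr = R n \<delta>"
  define N where "N = norm_n n x"
  have Rr: "Rr > 0" unfolding Rr_def using R_pos d by auto
  have NR: "N > Rr" using True unfolding N_def Rr_def by simp
  have N0: "N > 0" using NR Rr by simp
  define t where "t = (N/Rr) powr real n"
  have "1 powr real n < (N/Rr) powr real n" using NR Rr n
    by (intro powr_less_mono2) (auto simp: field_simps)
  then have t1: "t > 1" unfolding t_def by simp
  define k where "k = nat \<lfloor>log 2 t\<rfloor>"
  have lg: "log 2 t > 0" using t1 by simp
  have kf: "real k = \<lfloor>log 2 t\<rfloor>" unfolding k_def using lg by simp
  have k1: "real k \<le> log 2 t" using kf by linarith
  have k2: "log 2 t < real k + 1" using kf by linarith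
  have tk1: "2 powr real k \<le> t"
  proof -
    have "2 powr real k \<le> 2 powr (log 2 t)" using k1 by (intro powr_mono) auto
    then show ?thesis using t1 by simp
  qed
  have tk2: "t < 2 powr (real k + 1)"
  proof -
    have "2 powr (log 2 t) < 2 powr (real k + 1)" using k2 by (intro powr_less_mono) auto
    then show ?thesis using t1 by simp
  qed
  have Nt: "N = Rr * t powr (1 / real n)"
    unfolding t_def using Rr N0 n by (simp add: powr_powr)
  have "t powr (1 / real n) \<le> (2 powr (real k + 1)) powr (1/real n)"
    using tk2 t1 by (intro powr_mono2) auto
  also have "\<dots> = 2 powr ((real k + 1)/real n)" by (simp add: powr_powr)
  finally have Nle: "N \<le> Rr * 2 powr ((real k + 1)/real n)"
    unfolding Nt using Rr by simp
  have "f_cd n c \<delta> x = N powr (-2*c*real n)"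
    unfolding f_cd_def N_def using True by simp
  also have "\<dots> = (Rr * (N/Rr)) powr (-2*c*real n)" using Rr by simp
  also have "\<dots> = Rr powr (-2*c*real n) * (N/Rr) powr (-2*c*real n)"
    using Rr N0 by (intro powr_mult) 
  also have "\<dots> = Rr powr (-2*c*real n) * t powr (-2*c)"
    unfolding t_def by (simp add: powr_powr mult_ac)
  also have "\<dots> \<le> Rr powr (-2*c*real n) * (2 powr real k) powr (-2*c)"
    using tk1 c by (intro mult_left_mono powr_mono2') auto
  also have "\<dots> = Rr powr (-2*c*real n) * 2 powr (-2*c*real k)"
    by (simp add: powr_powr mult.commute)
  finally have fle: "f_cd n c \<delta> x \<le> Rr powr (-2*c*real n) * 2 powr (-2*c*real k)" .
  have "ennreal (f_cd n c \<delta> x) \<le> ?F k"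
    using fle Nle x unfolding Rr_def N_def by (simp add: indicator_def)
  also have "?F k \<le> (\<Sum>k. ?F k)"
  proof -
    have "sum ?F {k} \<le> suminf ?F" by (intro sum_le_suminf summableI) auto
    then show ?thesis by (simp only: sum.insert_if finite.emptyI insert_not_empty empty_iff if_False sum.empty add_0_right)
  qed
  finally show ?thesis .
qed


lemma ball_sets: "{x. norm_n n x \<le> r} \<inter> space (lebesgue_n n) \<in> sets (lebesgue_n n)"
proof -
  have [measurable]: "(\<lambda>x. norm_n n x) \<in> borel_measurable (lebesgue_n n)"
    by (rule norm_meas) (simp add: lebesgue_n_def)
  have "{x \<in> space (lebesgue_n n). norm_n n x \<le> r} \<in> sets (lebesgue_n n)" by measurable
  then show ?thesis by (simp add: Int_def conj_commute)
qed

lemma geo_id: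
  assumes d: "\<delta> > 0" and n: "n \<ge> 1"
  shows "R n \<delta> powr (-2*c*real n) * 2 powr (-2*c*real k) * (V n * (R n \<delta> * 2 powr ((real k + 1)/real n)) ^ n)
     = 2 * \<delta> * R n \<delta> powr (-2*c*real n) * (2 powr (1 - 2*c)) ^ k"
proof -
  have e1: "(2 powr ((real k + 1)/real n)) ^ n = 2 powr (real k + 1)"
    using n by (simp add: powr_realpow[symmetric] powr_powr)
  have e2: "(2 powr (1 - 2*c)) ^ k = 2 powr ((1 - 2*c) * real k)"
    by (simp add: powr_realpow[symmetric] powr_powr)
  have e3a: "2 powr (-2*c*real k) * 2 powr (real k + 1) = 2 powr (1 + (1 - 2*c) * real k)"
    by (simp add: powr_add[symmetric] algebra_simps)
  have e3b: "(2::real) * 2 powr ((1 - 2*c) * real k) = 2 powr (1 + (1 - 2*c) * real k)"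
    by (simp add: powr_add)
  have e3: "2 powr (-2*c*real k) * 2 powr (real k + 1) = 2 * 2 powr ((1 - 2*c) * real k)"
    using e3a e3b by simp
  have "V n * (R n \<delta> * 2 powr ((real k + 1)/real n)) ^ n = \<delta> * 2 powr (real k + 1)"
    using R_pow[OF d n] by (simp add: power_mult_distrib e1)
  then show ?thesis using e2 e3
    by (simp add: algebra_simps)
qed

lemma f_int:
  assumes c: "c > 1/2" and d: "\<delta> > 0" and n: "n \<ge> 1"
  shows "(\<integral>\<^sup>+x. ennreal (f_cd n c \<delta> x) \<partial>lebesgue_n n)
      \<le> ennreal (2*\<delta>/(1 - 2 powr (1-2*c)) * R n \<delta> powr (-2*c*real n))"
proof -
  define M where "M = lebesgue_n n"
  define B where "B = R n \<delta> powr (-2*c*real n)"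
  define q where "q = (2::real) powr (1 - 2*c)"
  define S where "S k = {x. norm_n n x \<le> R n \<delta> * 2 powr ((real k + 1)/real n)} \<inter> space M" for k::nat
  define a where "a k = B * 2 powr (-2*c*real k)" for k::nat
  have "(2::real) powr (1-2*c) < 2 powr 0" by (rule powr_less_mono) (use c in auto)
  then have q: "0 < q" "q < 1" unfolding q_def by auto
  have S: "S k \<in> sets M" for k unfolding S_def M_def by (rule ball_sets)
  have r: "R n \<delta> * 2 powr ((real k + 1)/real n) > 0" for k using R_pos[OF d] by simp
  have "(\<integral>\<^sup>+x. ennreal (f_cd n c \<delta> x) \<partial>M) \<le> (\<integral>\<^sup>+x. (\<Sum>k. ennreal (a k) * indicator (S k) x) \<partial>M)"
    by (rule nn_integral_mono) (use f_point[OF c d n] in \<open>auto simp: a_def B_def S_def M_def\<close>)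
  also have "\<dots> = (\<Sum>k. \<integral>\<^sup>+x. ennreal (a k) * indicator (S k) x \<partial>M)"
    by (rule nn_integral_suminf) (use S in measurable)
  also have "\<dots> = (\<Sum>k. ennreal (a k) * emeasure M (S k))"
    using S by (simp add: nn_integral_cmult_indicator)
  also have "\<dots> = (\<Sum>k. ennreal (2 * \<delta> * B * q ^ k))"
  proof (rule suminf_cong)
    fix k
    have "emeasure M (S k) = ennreal (V n * (R n \<delta> * 2 powr ((real k + 1)/real n)) ^ n)"
      unfolding S_def M_def by (rule ball_meas[OF r])
    then have "ennreal (a k) * emeasure M (S k) = ennreal (a k * (V n * (R n \<delta> * 2 powr ((real k + 1)/real n)) ^ n))"
      using V_pos[of n] R_pos[OF d, of n] by (simp add: ennreal_mult a_def B_def)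
    also have "\<dots> = ennreal (2 * \<delta> * B * q ^ k)"
      unfolding a_def B_def q_def by (rule arg_cong[where f=ennreal], rule geo_id[OF d n])
    finally show "ennreal (a k) * emeasure M (S k) = ennreal (2 * \<delta> * B * q ^ k)" .
  qed
  also have "\<dots> = ennreal (2 * \<delta> * B / (1 - q))"
  proof (rule suminf_ennreal_eq)
    show "0 \<le> 2 * \<delta> * B * q ^ k" for k using d q unfolding B_def by simp
    show "(\<lambda>k. 2 * \<delta> * B * q ^ k) sums (2 * \<delta> * B / (1 - q))"
      using sums_mult[OF geometric_sums[of q], of "2*\<delta>*B"] q by (simp add: divide_simps)
  qed
  finally show ?thesis unfolding M_def B_def q_def by (simp add: mult_ac)
qed



lemma J_eq:
  assumes e3: "e3 = 1 \<or> e3 = -1" and e4: "e4 = 1 \<or> e4 = -1"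
  shows "(\<integral>\<^sup>+x1. \<integral>\<^sup>+x2. ennreal (f_cd n c \<delta> (vadd (vscale e3 (vadd x1 x2)) y3)
              * f_cd n c \<delta> (vadd (vscale e4 (vsub x1 x2)) y4)) \<partial>lebesgue_n n \<partial>lebesgue_n n)
       = ennreal ((1/2)^n) * (\<integral>\<^sup>+x. ennreal (f_cd n c \<delta> x) \<partial>lebesgue_n n)^2"
proof -
  define M where "M = lebesgue_n n"
  have Mdef: "M = PiM {..<n} (\<lambda>_. lborel)" unfolding M_def lebesgue_n_def ..
  define F where "F z = ennreal (f_cd n c \<delta> z)" for z
  have e3a: "\<bar>e3\<bar> = 1" "e3 * e3 = 1" using e3 by auto
  have e4a: "\<bar>e4\<bar> = 1" "e4 * e4 = 1" using e4 by auto
  have Fm: "(\<lambda>z. F (g z)) \<in> borel_measurable N" if "\<And>i. i < n \<Longrightarrow> (\<lambda>z. g z i) \<in> borel_measurable N" for g N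
    unfolding F_def using f_meas[OF that] by measurable
  interpret P: finite_product_sigma_finite "\<lambda>_. lborel" "{..<n}" by standard auto
  interpret PP: pair_sigma_finite M M unfolding Mdef
    by (intro pair_sigma_finite.intro) (rule P.sigma_finite_measure_axioms)+
  define G where "G x1 w = F (\<lambda>i. e4 * (2 * x1 i - e3 * w i + e3 * y3 i) + y4 i)" for x1 w :: "nat \<Rightarrow> real"
  have A: "(\<integral>\<^sup>+x2. ennreal (f_cd n c \<delta> (vadd (vscale e3 (vadd x1 x2)) y3)
              * f_cd n c \<delta> (vadd (vscale e4 (vsub x1 x2)) y4)) \<partial>M)
         = (\<integral>\<^sup>+w. F w * G x1 w \<partial>M)" for x1
  proof -
    define h where "h w = F w * G x1 w" for w
    have hm: "h \<in> borel_measurable M"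
      unfolding h_def G_def Mdef by (intro borel_measurable_times_ennreal Fm) auto
    have "(\<integral>\<^sup>+x2. ennreal (f_cd n c \<delta> (vadd (vscale e3 (vadd x1 x2)) y3)
              * f_cd n c \<delta> (vadd (vscale e4 (vsub x1 x2)) y4)) \<partial>M)
        = (\<integral>\<^sup>+x2. h (\<lambda>i\<in>{..<n}. e3 * x2 i + (e3 * x1 i + y3 i)) \<partial>M)"
    proof (rule nn_integral_cong)
      fix x2
      have 1: "f_cd n c \<delta> (vadd (vscale e3 (vadd x1 x2)) y3) = f_cd n c \<delta> (\<lambda>i\<in>{..<n}. e3 * x2 i + (e3 * x1 i + y3 i))"
        by (rule f_cong) (simp add: vadd_def vscale_def algebra_simps)
      have 2: "f_cd n c \<delta> (vadd (vscale e4 (vsub x1 x2)) y4)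
          = f_cd n c \<delta> (\<lambda>i. e4 * (2 * x1 i - e3 * (\<lambda>i\<in>{..<n}. e3 * x2 i + (e3 * x1 i + y3 i)) i + e3 * y3 i) + y4 i)"
      proof (rule f_cong)
        fix i assume "i < n"
        have "e3 * (e3 * x2 i + (e3 * x1 i + y3 i)) = x2 i + x1 i + e3 * y3 i"
          using e3a by (simp add: algebra_simps) (metis mult.assoc mult_1 e3a(2))
        then show "vadd (vscale e4 (vsub x1 x2)) y4 i = e4 * (2 * x1 i - e3 * (\<lambda>i\<in>{..<n}. e3 * x2 i + (e3 * x1 i + y3 i)) i + e3 * y3 i) + y4 i"
          using \<open>i < n\<close> by (simp add: vadd_def vscale_def vsub_def algebra_simps)
      qed
      show "ennreal (f_cd n c \<delta> (vadd (vscale e3 (vadd x1 x2)) y3) * f_cd n c \<delta> (vadd (vscale e4 (vsub x1 x2)) y4))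
          = h (\<lambda>i\<in>{..<n}. e3 * x2 i + (e3 * x1 i + y3 i))"
        unfolding h_def F_def G_def 1 2 by (simp add: ennreal_mult f_nonneg)
    qed
    also have "\<dots> = ennreal ((1/\<bar>e3\<bar>)^card {..<n}) * (\<integral>\<^sup>+w. h w \<partial>M)"
      unfolding Mdef by (rule pim_affine) (use e3a hm in \<open>auto simp: Mdef\<close>)
    finally show ?thesis using e3a by (simp add: h_def)
  qed
  have C: "(\<integral>\<^sup>+x1. G x1 w \<partial>M) = ennreal ((1/2)^n) * (\<integral>\<^sup>+x. F x \<partial>M)" for w
  proof -
    have "(\<integral>\<^sup>+x1. G x1 w \<partial>M) = (\<integral>\<^sup>+x1. F (\<lambda>i\<in>{..<n}. (2*e4) * x1 i + (e4 * (e3 * y3 i - e3 * w i) + y4 i)) \<partial>M)"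
    proof (rule nn_integral_cong)
      fix x1
      show "G x1 w = F (\<lambda>i\<in>{..<n}. (2*e4) * x1 i + (e4 * (e3 * y3 i - e3 * w i) + y4 i))"
        unfolding G_def F_def by (rule arg_cong[where f=ennreal], rule f_cong) (simp add: algebra_simps)
    qed
    also have "\<dots> = ennreal ((1/\<bar>2*e4\<bar>)^card {..<n}) * (\<integral>\<^sup>+w. F w \<partial>M)"
      unfolding Mdef by (rule pim_affine) (use e4a in \<open>auto intro!: Fm\<close>)
    finally show ?thesis using e4a by (simp add: abs_mult)
  qed
  have Gm: "(\<lambda>(x1, w). F w * G x1 w) \<in> borel_measurable (M \<Otimes>\<^sub>M M)"
    unfolding G_def Mdef case_prod_beta by (intro borel_measurable_times_ennreal Fm) auto
  have "(\<integral>\<^sup>+x1. \<integral>\<^sup>+x2. ennreal (f_cd n c \<delta> (vadd (vscale e3 (vadd x1 x2)) y3)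
              * f_cd n c \<delta> (vadd (vscale e4 (vsub x1 x2)) y4)) \<partial>M \<partial>M)
      = (\<integral>\<^sup>+x1. \<integral>\<^sup>+w. F w * G x1 w \<partial>M \<partial>M)" by (simp add: A)
  also have "\<dots> = (\<integral>\<^sup>+w. \<integral>\<^sup>+x1. F w * G x1 w \<partial>M \<partial>M)"
    by (rule PP.Fubini'[OF Gm, symmetric])
  also have "\<dots> = (\<integral>\<^sup>+w. F w * (ennreal ((1/2)^n) * (\<integral>\<^sup>+x. F x \<partial>M)) \<partial>M)"
  proof (rule nn_integral_cong)
    fix w assume w: "w \<in> space M"
    have "(\<integral>\<^sup>+x1. F w * G x1 w \<partial>M) = F w * (\<integral>\<^sup>+x1. G x1 w \<partial>M)"
      by (rule nn_integral_cmult) (unfold G_def Mdef, intro Fm, auto)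
    then show "(\<integral>\<^sup>+x1. F w * G x1 w \<partial>M) = F w * (ennreal ((1/2)^n) * (\<integral>\<^sup>+x. F x \<partial>M))"
      by (simp add: C)
  qed
  also have "\<dots> = (\<integral>\<^sup>+w. F w \<partial>M) * (ennreal ((1/2)^n) * (\<integral>\<^sup>+x. F x \<partial>M))"
    by (rule nn_integral_multc) (unfold Mdef, intro Fm, auto)
  finally show ?thesis unfolding M_def F_def by (simp add: power2_eq_square mult_ac)
qed



lemma prod_bound:
  fixes g :: "nat \<Rightarrow> real"
  assumes "finite S" "\<And>i. i \<in> S \<Longrightarrow> 0 \<le> g i" "\<And>i. i \<in> S \<Longrightarrow> g i \<le> B"
  shows "prod g S \<le> B ^ card S"
proof -
  have "prod g S \<le> prod (\<lambda>_. B) S" by (rule prod_mono) (use assms in auto)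
  then show ?thesis by simp
qed

lemma prod_bound1:
  fixes g :: "nat \<Rightarrow> real"
  assumes "finite S" "j \<in> S" "\<And>i. i \<in> S \<Longrightarrow> 0 \<le> g i" "\<And>i. i \<in> S \<Longrightarrow> g i \<le> B"
  shows "prod g S \<le> g j * B ^ (card S - 1)"
proof -
  have "prod g S = g j * prod g (S - {j})"
    using assms by (simp add: prod.remove)
  also have "\<dots> \<le> g j * B ^ card (S - {j})"
    by (intro mult_left_mono prod_bound) (use assms in auto)
  finally show ?thesis using assms by simp
qed

lemma fm2:
  "(\<lambda>z. ennreal (f_cd n c \<delta> (vadd (vscale e3 (vadd (fst z) (snd z))) y3)
        * f_cd n c \<delta> (vadd (vscale e4 (vsub (fst z) (snd z))) y4)))
    \<in> borel_measurable (lebesgue_n n \<Otimes>\<^sub>M lebesgue_n n)"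
  unfolding lebesgue_n_def
  by (intro measurable_compose[OF _ measurable_ennreal] borel_measurable_times f_meas)
     (auto simp: vadd_def vscale_def vsub_def)

theorem theorem5p4:
  fixes c \<delta> :: real and l :: nat
  assumes "c > 1/2" and "\<delta> > 0" and "l \<ge> 4"
  shows "\<exists>K \<rho> :: real. K > 0 \<and> 0 < \<rho> \<and> \<rho> < 1 \<and>
    (\<forall>l1 l2 l3 l4 :: nat. \<forall>n :: nat. \<forall>\<epsilon> :: nat \<Rightarrow> real. \<forall>y :: nat \<Rightarrow> nat \<Rightarrow> real.
       l1 > 0 \<longrightarrow> l2 > 0 \<longrightarrow> l3 > 0 \<longrightarrow> l4 > 0 \<longrightarrow> l1 + l2 + l3 + l4 = l \<longrightarrow>
       n \<ge> 1 \<longrightarrow> (\<forall>i\<in>{1..l - 2}. \<epsilon> i = 1 \<or> \<epsilon> i = -1) \<longrightarrow>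
       I_y n c \<delta> l l1 l2 l3 l4 \<epsilon> y \<le> ennreal (K * \<rho> ^ n))"
proof -
  note c = assms(1) and d = assms(2)
  define D where "D = 2*\<delta>/(1 - 2 powr (1-2*c))"
  have "(2::real) powr (1-2*c) < 2 powr 0" by (rule powr_less_mono) (use c in auto)
  then have D: "D > 0" unfolding D_def using d by simp
  define K where "K = \<delta> powr (-2*c*real l) * D^2"
  have K: "K > 0" unfolding K_def using d D by simp
  show ?thesis
  proof (rule exI[of _ K], rule exI[of _ "1/2::real"], intro conjI K allI impI)
    fix l1 l2 l3 l4 n :: nat and \<epsilon> :: "nat \<Rightarrow> real" and y :: "nat \<Rightarrow> nat \<Rightarrow> real"
    assume l1: "l1 > 0" and l2: "l2 > 0" and l3: "l3 > 0" and l4: "l4 > 0"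
      and ls: "l1 + l2 + l3 + l4 = l" and n: "n \<ge> 1"
      and eps: "\<forall>i\<in>{1..l - 2}. \<epsilon> i = 1 \<or> \<epsilon> i = -1"
    define M where "M = lebesgue_n n"
    define B where "B = R n \<delta> powr (-2*c*real n)"
    define f where "f = f_cd n c \<delta>"
    have c0: "c > 0" using c by simp
    have fB: "f x \<le> B" for x unfolding f_def B_def by (rule f_le[OF c0 d n])
    have f0: "0 \<le> f x" for x unfolding f_def by (rule f_nonneg)
    have B0: "0 \<le> B" using f0 fB by (meson order_trans)
    define i3 where "i3 = l1 + l2 - 1"
    define i4 where "i4 = l1 + l2 + l3 - 1"
    have "i3 \<in> {1..l-2}" using l1 l2 l3 l4 ls unfolding i3_def by auto
    then have e3: "\<epsilon> i3 = 1 \<or> \<epsilon> i3 = -1" using eps by blast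
    have "i4 \<in> {1..l-2}" using l1 l2 l3 l4 ls unfolding i4_def by auto
    then have e4: "\<epsilon> i4 = 1 \<or> \<epsilon> i4 = -1" using eps by blast
    define T3 where "T3 x1 x2 = f (vadd (vscale (\<epsilon> i3) (vadd x1 x2)) (y i3))" for x1 x2
    define T4 where "T4 x1 x2 = f (vadd (vscale (\<epsilon> i4) (vsub x1 x2)) (y i4))" for x1 x2
    define P where "P x1 x2 = f x1
        * (\<Prod>i\<in>{1..l1 - 1}. f (vadd (vscale (\<epsilon> i) x1) (y i)))
        * f x2
        * (\<Prod>i\<in>{l1..l1 + l2 - 2}. f (vadd (vscale (\<epsilon> i) x2) (y i)))
        * (\<Prod>i\<in>{l1 + l2 - 1..l1 + l2 + l3 - 2}. f (vadd (vscale (\<epsilon> i) (vadd x1 x2)) (y i)))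
        * (\<Prod>i\<in>{l1 + l2 + l3 - 1..l - 2}. f (vadd (vscale (\<epsilon> i) (vsub x1 x2)) (y i)))" for x1 x2
    have Pb: "P x1 x2 \<le> B ^ (l - 2) * (T3 x1 x2 * T4 x1 x2)" for x1 x2
    proof -
      have c1: "card {1..l1 - 1} = l1 - 1" by simp
      have c2: "card {l1..l1 + l2 - 2} = l2 - 1" using l1 l2 by simp
      have c3: "card {l1 + l2 - 1..l1 + l2 + l3 - 2} = l3" using l1 l2 l3 by simp
      have c4: "card {l1 + l2 + l3 - 1..l - 2} = l4" using l1 l2 l3 l4 ls by simp
      have p1: "(\<Prod>i\<in>{1..l1 - 1}. f (vadd (vscale (\<epsilon> i) x1) (y i))) \<le> B ^ (l1 - 1)"
        using prod_bound[of "{1..l1 - 1}" "\<lambda>i. f (vadd (vscale (\<epsilon> i) x1) (y i))" B] f0 fB c1 by simp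
      have p2: "(\<Prod>i\<in>{l1..l1 + l2 - 2}. f (vadd (vscale (\<epsilon> i) x2) (y i))) \<le> B ^ (l2 - 1)"
        using prod_bound[of "{l1..l1 + l2 - 2}" "\<lambda>i. f (vadd (vscale (\<epsilon> i) x2) (y i))" B] f0 fB c2 by simp
      have p3a: "(\<Prod>i\<in>{l1 + l2 - 1..l1 + l2 + l3 - 2}. f (vadd (vscale (\<epsilon> i) (vadd x1 x2)) (y i))) \<le> T3 x1 x2 * B ^ (card {l1 + l2 - 1..l1 + l2 + l3 - 2} - 1)"
        unfolding T3_def by (rule prod_bound1) (use f0 fB l1 l2 l3 in \<open>auto simp: i3_def\<close>)
      have p3: "(\<Prod>i\<in>{l1 + l2 - 1..l1 + l2 + l3 - 2}. f (vadd (vscale (\<epsilon> i) (vadd x1 x2)) (y i))) \<le> T3 x1 x2 * B ^ (l3 - 1)"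
        using p3a unfolding c3 .
      have p4a: "(\<Prod>i\<in>{l1 + l2 + l3 - 1..l - 2}. f (vadd (vscale (\<epsilon> i) (vsub x1 x2)) (y i))) \<le> T4 x1 x2 * B ^ (card {l1 + l2 + l3 - 1..l - 2} - 1)"
        unfolding T4_def by (rule prod_bound1) (use f0 fB l1 l2 l3 l4 ls in \<open>auto simp: i4_def\<close>)
      have p4: "(\<Prod>i\<in>{l1 + l2 + l3 - 1..l - 2}. f (vadd (vscale (\<epsilon> i) (vsub x1 x2)) (y i))) \<le> T4 x1 x2 * B ^ (l4 - 1)"
        using p4a unfolding c4 .
      have "P x1 x2 \<le> B * B ^ (l1 - 1) * B * B ^ (l2 - 1) * (T3 x1 x2 * B ^ (l3 - 1)) * (T4 x1 x2 * B ^ (l4 - 1))"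
        unfolding P_def
        by (intro mult_mono p1 p2 p3 p4 fB) (auto simp: f0 B0 T3_def T4_def intro!: prod_nonneg)
      also have "\<dots> = B ^ (1 + (l1 - 1) + 1 + (l2 - 1) + (l3 - 1) + (l4 - 1)) * (T3 x1 x2 * T4 x1 x2)"
        by (simp add: power_add mult_ac)
      also have "1 + (l1 - 1) + 1 + (l2 - 1) + (l3 - 1) + (l4 - 1) = l - 2"
        using l1 l2 l3 l4 ls by simp
      finally show ?thesis .
    qed
    have J: "(\<integral>\<^sup>+x1. \<integral>\<^sup>+x2. ennreal (T3 x1 x2 * T4 x1 x2) \<partial>M \<partial>M) \<le> ennreal ((1/2)^n * (D * B)^2)"
    proof -
      have "(\<integral>\<^sup>+x1. \<integral>\<^sup>+x2. ennreal (T3 x1 x2 * T4 x1 x2) \<partial>M \<partial>M)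
          = ennreal ((1/2)^n) * (\<integral>\<^sup>+x. ennreal (f_cd n c \<delta> x) \<partial>lebesgue_n n)^2"
        unfolding T3_def T4_def M_def f_def by (rule J_eq[OF e3 e4])
      also have "\<dots> \<le> ennreal ((1/2)^n) * (ennreal (D * B))^2"
        using f_int[OF c d n] unfolding D_def B_def
        by (intro mult_left_mono power_mono) auto
      also have "\<dots> = ennreal ((1/2)^n) * ennreal ((D * B)^2)"
        by (subst ennreal_power) (use D B0 in auto)
      also have "\<dots> = ennreal ((1/2)^n * (D * B)^2)"
        by (rule ennreal_mult[symmetric]) auto
      finally show ?thesis .
    qed
    have inner_meas: "(\<lambda>x1. \<integral>\<^sup>+x2. ennreal (T3 x1 x2 * T4 x1 x2) \<partial>M) \<in> borel_measurable M"
    proof -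
      interpret P: finite_product_sigma_finite "\<lambda>_. lborel" "{..<n}" by standard auto
      have "sigma_finite_measure M" unfolding M_def lebesgue_n_def by (rule P.sigma_finite_measure_axioms)
      then show ?thesis
        using sigma_finite_measure.borel_measurable_nn_integral_fst[OF _ fm2[of n c \<delta> "\<epsilon> i3" "y i3" "\<epsilon> i4" "y i4"]]
        unfolding T3_def T4_def M_def f_def by simp
    qed
    have Vd: "V n powr (- 2 * real l * c) * B ^ l = \<delta> powr (-2*c*real l)"
    proof -
      have V0: "V n > 0" by (rule V_pos)
      have "B = (\<delta> / V n) powr (-2*c)"
        unfolding B_def R_def using n d V0 by (simp add: powr_powr)
      then have "B ^ l = (\<delta> / V n) powr (-2*c*real l)"
        using d V0 by (simp add: powr_realpow[symmetric] powr_powr)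
      also have "\<dots> = \<delta> powr (-2*c*real l) / V n powr (-2*c*real l)"
        using d V0 by (simp add: powr_divide)
      finally have "B ^ l = \<delta> powr (-2*c*real l) / V n powr (-2*c*real l)" .
      then show ?thesis using V0 by (simp add: mult_ac)
    qed
    have "I_y n c \<delta> l l1 l2 l3 l4 \<epsilon> y = ennreal (V n powr (- 2 * real l * c)) * (\<integral>\<^sup>+x1. \<integral>\<^sup>+x2. ennreal (P x1 x2) \<partial>M \<partial>M)"
      unfolding I_y_def P_def M_def f_def ..
    also have "\<dots> \<le> ennreal (V n powr (- 2 * real l * c)) * (\<integral>\<^sup>+x1. \<integral>\<^sup>+x2. ennreal (B ^ (l - 2)) * ennreal (T3 x1 x2 * T4 x1 x2) \<partial>M \<partial>M)"
      using Pb f0 B0 unfolding T3_def T4_def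
      by (intro mult_left_mono nn_integral_mono) (auto simp flip: ennreal_mult intro!: ennreal_leI)
    also have "(\<integral>\<^sup>+x1. \<integral>\<^sup>+x2. ennreal (B ^ (l - 2)) * ennreal (T3 x1 x2 * T4 x1 x2) \<partial>M \<partial>M)
        = ennreal (B ^ (l - 2)) * (\<integral>\<^sup>+x1. \<integral>\<^sup>+x2. ennreal (T3 x1 x2 * T4 x1 x2) \<partial>M \<partial>M)"
    proof -
      have "(\<integral>\<^sup>+x1. \<integral>\<^sup>+x2. ennreal (B ^ (l - 2)) * ennreal (T3 x1 x2 * T4 x1 x2) \<partial>M \<partial>M)
          = (\<integral>\<^sup>+x1. ennreal (B ^ (l - 2)) * (\<integral>\<^sup>+x2. ennreal (T3 x1 x2 * T4 x1 x2) \<partial>M) \<partial>M)"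
      proof (rule nn_integral_cong)
        fix x1 assume "x1 \<in> space M"
        show "(\<integral>\<^sup>+x2. ennreal (B ^ (l - 2)) * ennreal (T3 x1 x2 * T4 x1 x2) \<partial>M)
          = ennreal (B ^ (l - 2)) * (\<integral>\<^sup>+x2. ennreal (T3 x1 x2 * T4 x1 x2) \<partial>M)"
          by (rule nn_integral_cmult) (use measurable_Pair2[OF fm2[of n c \<delta> "\<epsilon> i3" "y i3" "\<epsilon> i4" "y i4"] \<open>x1 \<in> space M\<close>[unfolded M_def]] in \<open>simp add: T3_def T4_def M_def f_def\<close>)
      qed
      also have "\<dots> = ennreal (B ^ (l - 2)) * (\<integral>\<^sup>+x1. \<integral>\<^sup>+x2. ennreal (T3 x1 x2 * T4 x1 x2) \<partial>M \<partial>M)"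
        by (rule nn_integral_cmult[OF inner_meas])
      finally show ?thesis .
    qed
    also have "ennreal (V n powr (- 2 * real l * c)) * (ennreal (B ^ (l - 2)) * (\<integral>\<^sup>+x1. \<integral>\<^sup>+x2. ennreal (T3 x1 x2 * T4 x1 x2) \<partial>M \<partial>M))
        \<le> ennreal (V n powr (- 2 * real l * c)) * (ennreal (B ^ (l - 2)) * ennreal ((1/2)^n * (D * B)^2))"
      by (intro mult_left_mono J) auto
    also have "\<dots> = ennreal (V n powr (- 2 * real l * c) * B ^ l * D^2 * (1/2)^n)"
    proof -
      have "B ^ (l - 2) * ((1/2)^n * (D * B)^2) = B ^ l * D^2 * (1/2)^n"
      proof -
        have "l = (l - 2) + 2" using assms(3) by simp
        then have "B ^ l = B ^ (l - 2) * B^2" by (metis power_add)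
        then show ?thesis by (simp add: power_mult_distrib mult_ac)
      qed
      then show ?thesis using B0 D by (simp add: ennreal_mult[symmetric] mult_ac)
    qed
    also have "ennreal (V n powr (- 2 * real l * c) * B ^ l * D^2 * (1/2)^n) = ennreal (K * (1/2)^n)"
      unfolding K_def Vd by (simp add: mult_ac)
    finally have fin: "I_y n c \<delta> l l1 l2 l3 l4 \<epsilon> y \<le> ennreal (K * (1/2) ^ n)" .
    then show "I_y n c \<delta> l l1 l2 l3 l4 \<epsilon> y \<le> ennreal (K * (1/2) ^ n)" .
  qed auto
qed


end
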